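(* Let $\mathcal{A}$ be a finite or countable alphabet, $\mathcal{M}$ a countable set of probability measures on $\mathcal{A}^\infty$, $w:\mathcal{M}\to(0,1]$ a prior with $\sum_\nu w_\nu=1$, $\xi$ the Bayes mixture and $\mu\in\mathcal{M}$. If $\mathrm{Ent}(w)<\infty$, then $\mathbb{E}_\mu C_\infty\le \mathrm{Ent}(w)/w_\mu$ and $\lim_{t\to\infty}c_t=0$ with $\mu$-probability $1$.
   Context: $\mathcal{A}^\infty$ carries the $\sigma$-algebra generated by cylinders $\Gamma_x=\{x\omega\}$; for a measure $\rho$, $\rho(x):=\rho(\Gamma_x)$, $\rho(y|x):=\rho(xy)/\rho(x)$. Bayes mixture: $\xi(A):=\sum_{\nu\in\mathcal{M}}w_\nu\nu(A)$; posterior $w_\nu(x):=w_\nu\nu(x)/\xi(x)$. Entropy $\mathrm{Ent}(w):=-\sum_\nu w_\nu\ln w_\nu$ (natural logs). For a finite string $x$ and $\nu\in\mathcal{M}$, $d_x(\nu,\xi):=\sum_{a\in\mathcal{A}}\nu(a|x)\ln\frac{\nu(a|x)}{\xi(a|x)}$. For $\omega\in\mathcal{A}^\infty$, $c_t(\omega):=\sum_{\nu\in\mathcal{M}}w_\nu(\omega_{<t})\,d_{\omega_{<t}}(\nu,\xi)$ where $\omega_{<t}=\omega_1\cdots\omega_{t-1}$, and $C_\infty:=\sum_{t=1}^\infty c_t$. $\mathbb{E}_\mu$ denotes expectation w.r.t. $\mu$. *)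

theory Defs
  imports "HOL-Probability.Probability"
begin

text \<open>Sequences over the alphabet 'a (type of class countable: finite or countably infinite)
are streams; the cylinder of a finite string x is the set of streams starting with x.\<close>

definition cyl :: "'a list \<Rightarrow> 'a stream set" where
  "cyl x = {\<omega>. stake (length x) \<omega> = x}"

definition mcyl :: "'a stream measure \<Rightarrow> 'a list \<Rightarrow> real" where
  "mcyl \<rho> x = measure \<rho> (cyl x)"

definition mcond :: "'a stream measure \<Rightarrow> 'a list \<Rightarrow> 'a list \<Rightarrow> real" where
  "mcond \<rho> y x = mcyl \<rho> (x @ y) / mcyl \<rho> x"

definition xi :: "'a stream measure set \<Rightarrow> ('a stream measure \<Rightarrow> real) \<Rightarrow> 'a list \<Rightarrow> real" where
  "xi M w x = (\<Sum>\<^sub>\<infinity>\<nu>\<in>M. w \<nu> * mcyl \<nu> x)"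

definition xi_cond :: "'a stream measure set \<Rightarrow> ('a stream measure \<Rightarrow> real) \<Rightarrow> 'a list \<Rightarrow> 'a list \<Rightarrow> real" where
  "xi_cond M w y x = xi M w (x @ y) / xi M w x"

definition post :: "'a stream measure set \<Rightarrow> ('a stream measure \<Rightarrow> real) \<Rightarrow> 'a stream measure \<Rightarrow> 'a list \<Rightarrow> real" where
  "post M w \<nu> x = w \<nu> * mcyl \<nu> x / xi M w x"

definition Ent :: "'a stream measure set \<Rightarrow> ('a stream measure \<Rightarrow> real) \<Rightarrow> real" where
  "Ent M w = (\<Sum>\<^sub>\<infinity>\<nu>\<in>M. - (w \<nu> * ln (w \<nu>)))"

text \<open>d_x(nu,xi) = sum_a nu(a|x) ln (nu(a|x)/xi(a|x)) (terms with nu(a|x)=0 are 0)\<close>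
definition dKL :: "'a stream measure set \<Rightarrow> ('a stream measure \<Rightarrow> real) \<Rightarrow> 'a list \<Rightarrow> 'a stream measure \<Rightarrow> real" where
  "dKL M w x \<nu> = (\<Sum>\<^sub>\<infinity>a\<in>UNIV. mcond \<nu> [a] x * ln (mcond \<nu> [a] x / xi_cond M w [a] x))"

text \<open>c_t(omega) = sum_nu w_nu(omega_{<t}) d_{omega_{<t}}(nu,xi), t >= 1 (nonnegative terms; sum in ennreal)\<close>
definition ct :: "'a stream measure set \<Rightarrow> ('a stream measure \<Rightarrow> real) \<Rightarrow> nat \<Rightarrow> 'a stream \<Rightarrow> ennreal" where
  "ct M w t \<omega> = (\<integral>\<^sup>+ \<nu>. ennreal (post M w \<nu> (stake (t - 1) \<omega>) * dKL M w (stake (t - 1) \<omega>) \<nu>) \<partial>count_space M)"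

definition Cinf :: "'a stream measure set \<Rightarrow> ('a stream measure \<Rightarrow> real) \<Rightarrow> 'a stream \<Rightarrow> ennreal" where
  "Cinf M w \<omega> = (\<Sum>t. ct M w (Suc t) \<omega>)"

end

theory Submission
  imports Defs
begin
lemma nn_to_has_sum:
  fixes f :: "'b \<Rightarrow> real"
  assumes "\<And>x. x\<in>A \<Longrightarrow> 0 \<le> f x" "(\<integral>\<^sup>+x. ennreal (f x) \<partial>count_space A) = ennreal s" "0 \<le> s"
  shows "(f has_sum s) A"
proof -
  have int: "integrable (count_space A) f"
    by (rule integrableI_nonneg) (use assms in auto)
  hence abs: "Infinite_Set_Sum.abs_summable_on f A" by (simp add: abs_summable_on_def)
  have "infsetsum f A = s"
    using infsetsum_conv_nn_integral[of A f] assms by auto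
  moreover have "infsetsum f A = infsum f A" by (rule infsetsum_infsum[OF abs])
  moreover have "f summable_on A"
    using abs abs_summable_equivalent abs_summable_summable by blast
  ultimately show ?thesis by (metis has_sum_infsum)
qed

lemma has_sum_to_nn:
  fixes f :: "'b \<Rightarrow> real"
  assumes "(f has_sum s) A" "\<And>x. x\<in>A \<Longrightarrow> 0 \<le> f x"
  shows "(\<integral>\<^sup>+x. ennreal (f x) \<partial>count_space A) = ennreal s"
proof -
  have "(\<lambda>x. norm (f x)) summable_on A"
    using assms by (metis (mono_tags, lifting) has_sum_cong has_sum_imp_summable real_norm_def abs_of_nonneg)
  hence abs: "Infinite_Set_Sum.abs_summable_on f A" using abs_summable_equivalent by blast
  show ?thesis
    using nn_integral_conv_infsetsum[OF abs] assms infsetsum_infsum[OF abs] infsumI[OF assms(1)] by auto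
qed

lemma has_sum_diff':
  fixes f g :: "'b \<Rightarrow> real"
  assumes "(f has_sum a) A" "(g has_sum b) A"
  shows "((\<lambda>x. f x - g x) has_sum (a - b)) A"
proof -
  have "((\<lambda>x. - g x) has_sum - b) A" using assms(2) has_sum_uminus by (metis minus_minus)
  from has_sum_add[OF assms(1) this] show ?thesis by simp
qed

locale pv =
  fixes M :: "('a::countable) stream measure set" and w :: "'a stream measure \<Rightarrow> real"
  assumes countM: "countable M"
    and probM: "\<And>\<nu>. \<nu> \<in> M \<Longrightarrow> prob_space \<nu>"
    and setsM: "\<And>\<nu>. \<nu> \<in> M \<Longrightarrow> sets \<nu> = sets (stream_space (count_space UNIV))"
    and wpos: "\<And>\<nu>. \<nu> \<in> M \<Longrightarrow> 0 < w \<nu> \<and> w \<nu> \<le> 1"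
    and wsum: "(w has_sum 1) M"
begin

lemma space_eq: "\<nu> \<in> M \<Longrightarrow> space \<nu> = UNIV"
  using sets_eq_imp_space_eq[OF setsM] by (simp add: space_stream_space)

lemma cyl_sets: assumes "\<nu> \<in> M" shows "cyl x \<in> sets \<nu>"
proof -
  have "cyl x = stake (length x) -` {x} \<inter> space (stream_space (count_space UNIV))"
    by (auto simp: cyl_def space_stream_space)
  also have "\<dots> \<in> sets (stream_space (count_space UNIV))"
    by (rule measurable_sets[OF measurable_stake]) simp
  finally show ?thesis using setsM[OF assms] by simp
qed

lemma m_nonneg: "0 \<le> mcyl \<nu> x" by (simp add: mcyl_def)

lemma m_le1: "\<nu> \<in> M \<Longrightarrow> mcyl \<nu> x \<le> 1"
  unfolding mcyl_def using probM prob_space.prob_le_1 by blast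

lemma m_Nil: "\<nu> \<in> M \<Longrightarrow> mcyl \<nu> [] = 1"
proof -
  assume a: "\<nu> \<in> M"
  have "cyl [] = space \<nu>" using space_eq[OF a] by (auto simp: cyl_def)
  thus ?thesis using prob_space.prob_space[OF probM[OF a]] by (simp add: mcyl_def)
qed

lemma m_mono: assumes "\<nu> \<in> M" shows "mcyl \<nu> (x@y) \<le> mcyl \<nu> x"
proof -
  interpret prob_space \<nu> using probM[OF assms] .
  have "cyl (x@y) \<subseteq> cyl x" by (auto simp: cyl_def) (metis append_eq_conv_conj length_stake stake_add take_add)
  thus ?thesis unfolding mcyl_def
    using finite_measure_mono cyl_sets[OF assms] by blast
qed

lemma meas_has_sum:
  assumes "\<nu> \<in> M" "countable I" "\<And>i. i \<in> I \<Longrightarrow> X i \<in> sets \<nu>" "disjoint_family_on X I"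
  shows "((\<lambda>i. measure \<nu> (X i)) has_sum measure \<nu> (\<Union>(X ` I))) I"
proof (rule nn_to_has_sum)
  interpret prob_space \<nu> using probM[OF assms(1)] .
  have "emeasure \<nu> (\<Union>(X ` I)) = (\<integral>\<^sup>+i. emeasure \<nu> (X i) \<partial>count_space I)"
    by (rule emeasure_UN_countable) (use assms in auto)
  thus "(\<integral>\<^sup>+i. ennreal (measure \<nu> (X i)) \<partial>count_space I) = ennreal (measure \<nu> (\<Union>(X ` I)))"
    by (simp add: emeasure_eq_measure)
qed auto

lemma cyl_children: "cyl x = (\<Union>a. cyl (x@[a]))"
  by (auto simp del: stake.simps simp: cyl_def stake_Suc)

lemma cyl_children_disj: "disjoint_family (\<lambda>a. cyl (x@[a]))"
  by (auto simp: disjoint_family_on_def cyl_def stake_Suc)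

lemma m_children: assumes "\<nu> \<in> M" shows "((\<lambda>a. mcyl \<nu> (x@[a])) has_sum mcyl \<nu> x) UNIV"
  using meas_has_sum[OF assms, of UNIV "\<lambda>a. cyl (x@[a])"] cyl_children[of x] cyl_children_disj[of x]
    cyl_sets[OF assms] unfolding mcyl_def by simp

lemma countable_L: "countable {x :: 'a list. length x = n}"
  by (rule countable_subset[of _ UNIV]) auto

lemma cyl_level: "(\<Union>x\<in>{x::'a list. length x = n}. cyl x) = UNIV"
  by (auto simp: cyl_def)

lemma cyl_level_disj: "disjoint_family_on cyl {x::'a list. length x = n}"
  by (auto simp: disjoint_family_on_def cyl_def)

lemma m_level: assumes "\<nu> \<in> M" shows "(mcyl \<nu> has_sum 1) {x. length x = n}"
proof -
  have "((\<lambda>x. measure \<nu> (cyl x)) has_sum measure \<nu> (\<Union>(cyl ` {x. length x = n}))) {x. length x = n}"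
    by (rule meas_has_sum[OF assms countable_L cyl_sets[OF assms] cyl_level_disj])
  moreover have "measure \<nu> (\<Union>(cyl ` {x. length x = n})) = 1"
    using cyl_level[of n] space_eq[OF assms] prob_space.prob_space[OF probM[OF assms]] by simp
  ultimately show ?thesis by (simp add: mcyl_def[abs_def])
qed


lemma w_nonneg: "\<nu> \<in> M \<Longrightarrow> 0 \<le> w \<nu>" using wpos by fastforce

lemma wm_nonneg: assumes "\<nu> \<in> M" shows "0 \<le> w \<nu> * mcyl \<nu> x"
  using w_nonneg[OF assms] m_nonneg[of \<nu> x] by simp

lemma wm_summable: "(\<lambda>\<nu>. w \<nu> * mcyl \<nu> x) summable_on M"
  by (rule summable_on_comparison_test[OF has_sum_imp_summable[OF wsum]])
     (use wpos m_le1 m_nonneg wm_nonneg in \<open>auto intro: mult_left_le\<close>)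

lemma xi_has: "((\<lambda>\<nu>. w \<nu> * mcyl \<nu> x) has_sum xi M w x) M"
  unfolding xi_def using wm_summable by (rule has_sum_infsum)

lemma xi_nonneg: "0 \<le> xi M w x"
  unfolding xi_def by (rule infsum_nonneg) (use wm_nonneg in auto)

lemma xi_ge: assumes "\<nu> \<in> M" shows "w \<nu> * mcyl \<nu> x \<le> xi M w x"
  using finite_sum_le_infsum[OF wm_summable, of "{\<nu>}" x] assms wm_nonneg
  unfolding xi_def by auto

lemma xi_Nil: "xi M w [] = 1"
proof -
  have "((\<lambda>\<nu>. w \<nu> * mcyl \<nu> []) has_sum 1) M"
    using wsum by (rule has_sum_cong[THEN iffD1, rotated]) (simp add: m_Nil)
  thus ?thesis using xi_has[of "[]"] has_sum_unique by blast
qed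

lemma xi_transfer:
  assumes I: "countable I" and h: "\<And>\<nu>. \<nu> \<in> M \<Longrightarrow> ((\<lambda>i. mcyl \<nu> (h i)) has_sum mcyl \<nu> y) I"
  shows "((\<lambda>i. xi M w (h i)) has_sum xi M w y) I"
proof (rule nn_to_has_sum)
  have "(\<integral>\<^sup>+i. ennreal (xi M w (h i)) \<partial>count_space I)
      = (\<integral>\<^sup>+i. \<integral>\<^sup>+\<nu>. ennreal (w \<nu> * mcyl \<nu> (h i)) \<partial>count_space M \<partial>count_space I)"
    by (rule nn_integral_cong, rule has_sum_to_nn[OF xi_has, symmetric])
       (use wm_nonneg in auto)
  also have "\<dots> = (\<integral>\<^sup>+\<nu>. \<integral>\<^sup>+i. ennreal (w \<nu> * mcyl \<nu> (h i)) \<partial>count_space I \<partial>count_space M)"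
    by (rule nn_integral_count_space_nn_integral[OF countM]) simp
  also have "\<dots> = (\<integral>\<^sup>+\<nu>. ennreal (w \<nu> * mcyl \<nu> y) \<partial>count_space M)"
  proof (rule nn_integral_cong)
    fix \<nu> assume "\<nu> \<in> space (count_space M)"
    hence \<nu>: "\<nu> \<in> M" by simp
    have "(\<integral>\<^sup>+i. ennreal (w \<nu> * mcyl \<nu> (h i)) \<partial>count_space I)
        = (\<integral>\<^sup>+i. ennreal (w \<nu>) * ennreal (mcyl \<nu> (h i)) \<partial>count_space I)"
      by (rule nn_integral_cong) (simp add: ennreal_mult w_nonneg[OF \<nu>] m_nonneg)
    also have "\<dots> = ennreal (w \<nu>) * ennreal (mcyl \<nu> y)"
      by (subst nn_integral_cmult) (simp_all add: has_sum_to_nn[OF h[OF \<nu>]] m_nonneg)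
    finally show "(\<integral>\<^sup>+i. ennreal (w \<nu> * mcyl \<nu> (h i)) \<partial>count_space I) = ennreal (w \<nu> * mcyl \<nu> y)"
      by (simp add: ennreal_mult w_nonneg[OF \<nu>] m_nonneg)
  qed
  also have "\<dots> = ennreal (xi M w y)"
    by (rule has_sum_to_nn[OF xi_has]) (use wm_nonneg in auto)
  finally show "(\<integral>\<^sup>+i. ennreal (xi M w (h i)) \<partial>count_space I) = ennreal (xi M w y)" .
qed (auto simp: xi_nonneg)

lemma xi_children: "((\<lambda>a. xi M w (x@[a])) has_sum xi M w x) UNIV"
  by (rule xi_transfer) (auto intro: m_children)

lemma xi_level: "(xi M w has_sum 1) {x. length x = n}"
proof -
  have "\<And>\<nu>. \<nu> \<in> M \<Longrightarrow> ((\<lambda>i. mcyl \<nu> (id i)) has_sum mcyl \<nu> []) {x. length x = n}"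
    by (simp add: m_Nil m_level)
  from xi_transfer[OF countable_L this] show ?thesis by (simp add: xi_Nil)
qed

definition gg where "gg \<nu> y = mcyl \<nu> y * ln (mcyl \<nu> y / xi M w y)"

lemma gg_bounds: assumes \<nu>: "\<nu> \<in> M"
  shows "- xi M w y \<le> gg \<nu> y \<and> gg \<nu> y \<le> mcyl \<nu> y * (- ln (w \<nu>))"
proof (cases "mcyl \<nu> y = 0")
  case True
  have "0 \<le> - ln (w \<nu>)" using wpos[OF \<nu>] by simp
  thus ?thesis using True xi_nonneg by (simp add: gg_def)
next
  case False
  define m where "m = mcyl \<nu> y"
  define z where "z = xi M w y"
  have w0: "0 < w \<nu>" "w \<nu> \<le> 1" using wpos[OF \<nu>] by auto
  have m0: "0 < m" using False m_nonneg m_def by (metis less_eq_real_def)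
  have zge: "w \<nu> * m \<le> z" using xi_ge[OF \<nu>] m_def z_def by simp
  have z0: "0 < z" using zge w0 m0 by (smt (verit) mult_pos_pos)
  have r0: "0 < m / z" using m0 z0 by simp
  have "m / z \<le> 1 / w \<nu>" using zge w0 z0 by (simp add: field_simps)
  hence "ln (m / z) \<le> ln (1 / w \<nu>)" using r0 w0 by (subst ln_le_cancel_iff) auto
  hence "ln (m / z) \<le> - ln (w \<nu>)" using w0 by (simp add: ln_div)
  hence up: "m * ln (m / z) \<le> m * (- ln (w \<nu>))" using m0 by (intro mult_left_mono) auto
  have "ln (z / m) \<le> z / m - 1" using m0 z0 by (intro ln_le_minus_one) simp
  hence "- ln (m / z) \<le> z / m - 1" using m0 z0 by (simp add: ln_div)
  hence "m * (- ln (m / z)) \<le> m * (z / m - 1)" using m0 by (intro mult_left_mono) auto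
  moreover have "m * (z / m - 1) = z - m" using m0 by (simp add: field_simps)
  ultimately have lo: "- z \<le> m * ln (m / z)" using m0 by linarith
  show ?thesis using up lo by (simp add: gg_def m_def z_def)
qed

lemma gg_summable:
  assumes \<nu>: "\<nu> \<in> M" and hm: "((\<lambda>i. mcyl \<nu> (h i)) has_sum a) I"
    and hx: "((\<lambda>i. xi M w (h i)) has_sum b) I"
  shows "(\<lambda>i. gg \<nu> (h i)) summable_on I"
proof -
  have "((\<lambda>i. xi M w (h i) + mcyl \<nu> (h i) * (- ln (w \<nu>))) has_sum (b + a * (- ln (w \<nu>)))) I"
    by (rule has_sum_add[OF hx has_sum_cmult_left[OF hm]])
  hence s: "(\<lambda>i. xi M w (h i) + mcyl \<nu> (h i) * (- ln (w \<nu>))) summable_on I"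
    by (rule has_sum_imp_summable)
  have ln0: "0 \<le> - ln (w \<nu>)" using wpos[OF \<nu>] by simp
  have "(\<lambda>i. norm (gg \<nu> (h i))) summable_on I"
  proof (rule summable_on_comparison_test[OF s])
    fix i
    show "norm (gg \<nu> (h i)) \<le> xi M w (h i) + mcyl \<nu> (h i) * (- ln (w \<nu>))"
      using gg_bounds[OF \<nu>, of "h i"] xi_nonneg[of "h i"]
        mult_nonneg_nonneg[OF m_nonneg[of \<nu> "h i"] ln0]
      unfolding real_norm_def abs_le_iff by linarith
  qed (rule norm_ge_zero)
  thus ?thesis by (rule Infinite_Sum.abs_summable_summable)
qed


definition GG where "GG \<nu> x = infsum (\<lambda>a. gg \<nu> (x@[a])) UNIV - gg \<nu> x"

lemma gg_children_summable: "\<nu> \<in> M \<Longrightarrow> (\<lambda>a. gg \<nu> (x@[a])) summable_on UNIV"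
  by (rule gg_summable[OF _ m_children xi_children])

lemma GG_alt:
  assumes \<nu>: "\<nu> \<in> M"
  shows "((\<lambda>a. gg \<nu> (x@[a]) - mcyl \<nu> (x@[a]) * ln (mcyl \<nu> x / xi M w x)) has_sum GG \<nu> x) UNIV"
  using has_sum_diff'[OF has_sum_infsum[OF gg_children_summable[OF \<nu>]]
      has_sum_cmult_left[OF m_children[OF \<nu>]]]
  by (simp add: GG_def gg_def)

lemma m_zero_children: assumes \<nu>: "\<nu> \<in> M" and "mcyl \<nu> x = 0" shows "mcyl \<nu> (x@[a]) = 0"
  using m_mono[OF \<nu>, of x "[a]"] m_nonneg[of \<nu> "x@[a]"] assms(2) by simp

lemma GG_zero: assumes \<nu>: "\<nu> \<in> M" and "mcyl \<nu> x = 0" shows "GG \<nu> x = 0"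
  using m_zero_children[OF assms] assms(2) by (simp add: GG_def gg_def)

lemma dKL_eq: assumes \<nu>: "\<nu> \<in> M" shows "mcyl \<nu> x * dKL M w x \<nu> = GG \<nu> x"
proof (cases "mcyl \<nu> x = 0")
  case True thus ?thesis using GG_zero[OF \<nu> True] by simp
next
  case False
  define m where "m = mcyl \<nu> x"
  define z where "z = xi M w x"
  have w0: "0 < w \<nu>" "w \<nu> \<le> 1" using wpos[OF \<nu>] by auto
  have m0: "0 < m" using False m_nonneg m_def by (metis less_eq_real_def)
  have zge: "w \<nu> * m \<le> z" using xi_ge[OF \<nu>] m_def z_def by simp
  have z0: "0 < z" using zge w0 m0 by (smt (verit) mult_pos_pos)
  have termeq: "mcond \<nu> [a] x * ln (mcond \<nu> [a] x / xi_cond M w [a] x)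
     = (1/m) * (gg \<nu> (x@[a]) - mcyl \<nu> (x@[a]) * ln (m / z))" for a
  proof (cases "mcyl \<nu> (x@[a]) = 0")
    case True thus ?thesis by (simp add: mcond_def gg_def)
  next
    case False
    define ma where "ma = mcyl \<nu> (x@[a])"
    define za where "za = xi M w (x@[a])"
    have ma0: "0 < ma" using False m_nonneg ma_def by (metis less_eq_real_def)
    have zage: "w \<nu> * ma \<le> za" using xi_ge[OF \<nu>] ma_def za_def by simp
    have za0: "0 < za" using zage w0 ma0 by (smt (verit) mult_pos_pos)
    have "(ma / m) / (za / z) = (ma / za) / (m / z)" using m0 z0 ma0 za0 by (simp add: field_simps)
    hence "ln ((ma / m) / (za / z)) = ln ((ma / za) / (m / z))" by (simp only:)
    also have "\<dots> = ln (ma / za) - ln (m / z)"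
      by (rule ln_divide_pos) (use m0 z0 ma0 za0 in simp_all)
    finally have L: "ln ((ma / m) / (za / z)) = ln (ma / za) - ln (m / z)" .
    have alg: "\<And>a m A B::real. (a / m) * (A - B) = (1/m) * (a * A - a * B)" by (simp add: field_simps)
    have "(ma / m) * ln ((ma / m) / (za / z)) = (1/m) * (ma * ln (ma / za) - ma * ln (m / z))"
      unfolding L by (rule alg)
    thus ?thesis by (simp add: mcond_def xi_cond_def gg_def ma_def za_def m_def z_def)
  qed
  have "((\<lambda>a. mcond \<nu> [a] x * ln (mcond \<nu> [a] x / xi_cond M w [a] x)) has_sum (1/m) * GG \<nu> x) UNIV"
    using has_sum_cmult_right[OF GG_alt[OF \<nu>, of x], of "1/m"] unfolding termeq m_def z_def .
  hence "dKL M w x \<nu> = (1/m) * GG \<nu> x" unfolding dKL_def by (rule infsumI)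
  thus ?thesis using m0 by (simp add: m_def)
qed

lemma GG_nonneg: assumes \<nu>: "\<nu> \<in> M" shows "0 \<le> GG \<nu> x"
proof (cases "mcyl \<nu> x = 0")
  case True thus ?thesis using GG_zero[OF \<nu> True] by simp
next
  case False
  define m where "m = mcyl \<nu> x"
  define z where "z = xi M w x"
  have w0: "0 < w \<nu>" "w \<nu> \<le> 1" using wpos[OF \<nu>] by auto
  have m0: "0 < m" using False m_nonneg m_def by (metis less_eq_real_def)
  have zge: "w \<nu> * m \<le> z" using xi_ge[OF \<nu>] m_def z_def by simp
  have z0: "0 < z" using zge w0 m0 by (smt (verit) mult_pos_pos)
  have low: "((\<lambda>a. mcyl \<nu> (x@[a]) - xi M w (x@[a]) * (m / z)) has_sum (m - z * (m / z))) UNIV"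
    unfolding m_def z_def by (rule has_sum_diff'[OF m_children[OF \<nu>] has_sum_cmult_left[OF xi_children]])
  have "m - z * (m / z) \<le> GG \<nu> x"
  proof (rule has_sum_mono[OF low GG_alt[OF \<nu>, of x]])
    fix a
    show "mcyl \<nu> (x@[a]) - xi M w (x@[a]) * (m / z)
      \<le> gg \<nu> (x@[a]) - mcyl \<nu> (x@[a]) * ln (mcyl \<nu> x / xi M w x)"
    proof (cases "mcyl \<nu> (x@[a]) = 0")
      case True thus ?thesis using xi_nonneg[of "x@[a]"] m0 z0 by (simp add: gg_def)
    next
      case False
      define ma where "ma = mcyl \<nu> (x@[a])"
      define za where "za = xi M w (x@[a])"
      have ma0: "0 < ma" using False m_nonneg ma_def by (metis less_eq_real_def)
      have zage: "w \<nu> * ma \<le> za" using xi_ge[OF \<nu>] ma_def za_def by simp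
      have za0: "0 < za" using zage w0 ma0 by (smt (verit) mult_pos_pos)
      define R where "R = (ma / za) / (m / z)"
      have R0: "0 < R" using m0 z0 ma0 za0 by (simp add: R_def)
      have lnR: "ln R = ln (ma / za) - ln (m / z)" unfolding R_def
        by (rule ln_divide_pos) (use m0 z0 ma0 za0 in simp_all)
      have "ln (1 / R) \<le> 1 / R - 1" using R0 by (intro ln_le_minus_one) simp
      hence "- ln R \<le> 1 / R - 1" using R0 by (simp add: ln_div)
      hence "ma * (- ln R) \<le> ma * (1 / R - 1)" using ma0 by (intro mult_left_mono) auto
      moreover have "ma * (1 / R - 1) = za * (m / z) - ma" using m0 z0 ma0 za0 by (simp add: R_def field_simps)
      ultimately have "ma - za * (m / z) \<le> ma * ln R" by linarith
      thus ?thesis by (simp add: lnR gg_def ma_def za_def m_def z_def algebra_simps)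
    qed
  qed
  thus ?thesis using z0 by simp
qed

definition DD where "DD \<nu> n = infsum (gg \<nu>) {x. length x = n}"

lemma bij_snoc: "bij_betw (\<lambda>(x,a). x@[a]) ({x::'a list. length x = n} \<times> UNIV) {x. length x = Suc n}"
proof (rule bij_betw_byWitness[where f' = "\<lambda>y. (butlast y, last y)"])
qed (auto simp: length_Suc_conv_rev)

lemma gg_level_summable: assumes \<nu>: "\<nu> \<in> M" shows "gg \<nu> summable_on {x. length x = k}"
proof -
  have a1: "((\<lambda>i. mcyl \<nu> (id i)) has_sum 1) {x. length x = k}" using m_level[OF \<nu>] by simp
  have a2: "((\<lambda>i. xi M w (id i)) has_sum 1) {x. length x = k}" using xi_level by simp
  have "(\<lambda>i. gg \<nu> (id i)) summable_on {x. length x = k}"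
    by (rule gg_summable[OF \<nu> a1 a2])
  thus "gg \<nu> summable_on {x. length x = k}" by simp
qed

lemma GG_level: assumes \<nu>: "\<nu> \<in> M"
  shows "(GG \<nu> has_sum (DD \<nu> (Suc n) - DD \<nu> n)) {x. length x = n}"
proof -
  have sL: "\<And>k. gg \<nu> summable_on {x. length x = k}" by (rule gg_level_summable[OF \<nu>])
  have "(gg \<nu> has_sum DD \<nu> (Suc n)) {x. length x = Suc n}"
    unfolding DD_def by (rule has_sum_infsum[OF sL])
  hence "((\<lambda>(x,a). gg \<nu> (x@[a])) has_sum DD \<nu> (Suc n)) ({x. length x = n} \<times> UNIV)"
    using has_sum_reindex_bij_betw[OF bij_snoc, of "gg \<nu>"] by (simp add: case_prod_unfold)
  hence "((\<lambda>x. infsum (\<lambda>a. gg \<nu> (x@[a])) UNIV) has_sum DD \<nu> (Suc n)) {x. length x = n}"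
    by (rule has_sum_SigmaD) (use has_sum_infsum[OF gg_children_summable[OF \<nu>]] in auto)
  from has_sum_diff'[OF this has_sum_infsum[OF sL[of n]]] show ?thesis
    by (simp add: GG_def[abs_def] DD_def)
qed

lemma DD_0: assumes \<nu>: "\<nu> \<in> M" shows "DD \<nu> 0 = 0"
  using m_Nil[OF \<nu>] xi_Nil by (simp add: DD_def gg_def)

lemma DD_le: assumes \<nu>: "\<nu> \<in> M" shows "DD \<nu> n \<le> - ln (w \<nu>)"
proof -
  have sL: "gg \<nu> summable_on {x. length x = n}" by (rule gg_level_summable[OF \<nu>])
  have "((\<lambda>x. mcyl \<nu> x * (- ln (w \<nu>))) has_sum 1 * (- ln (w \<nu>))) {x. length x = n}"
    by (rule has_sum_cmult_left[OF m_level[OF \<nu>]])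
  from has_sum_mono[OF has_sum_infsum[OF sL] this] gg_bounds[OF \<nu>] show ?thesis
    by (simp add: DD_def)
qed


lemma stake_meas: "\<nu> \<in> M \<Longrightarrow> stake n \<in> measurable \<nu> (count_space UNIV)"
  using measurable_stake measurable_cong_sets[OF setsM refl] by blast

lemma stake_set: assumes \<nu>: "\<nu> \<in> M" shows "{\<omega>. stake n \<omega> = x} \<in> sets \<nu>"
proof -
  have "{\<omega>. stake n \<omega> = x} = stake n -` {x} \<inter> space \<nu>" using space_eq[OF \<nu>] by auto
  thus ?thesis using measurable_sets[OF stake_meas[OF \<nu>]] by simp
qed

lemma stake_set_eq: "{\<omega>. stake n \<omega> = x} = (if length x = n then cyl x else {})"
  by (auto simp: cyl_def)

lemma stake_integral:
  assumes \<nu>: "\<nu> \<in> M"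
  shows "(\<integral>\<^sup>+\<omega>. f (stake n \<omega>) \<partial>\<nu>)
       = (\<integral>\<^sup>+x. f x * (indicator {x. length x = n} x * ennreal (mcyl \<nu> x)) \<partial>count_space UNIV)"
proof -
  interpret prob_space \<nu> using probM[OF \<nu>] .
  have "(\<integral>\<^sup>+\<omega>. f (stake n \<omega>) \<partial>\<nu>)
      = (\<integral>\<^sup>+\<omega>. \<integral>\<^sup>+x. f x * indicator {\<omega>. stake n \<omega> = x} \<omega> \<partial>count_space UNIV \<partial>\<nu>)"
  proof (rule nn_integral_cong)
    fix \<omega>
    have "(\<integral>\<^sup>+x. f x * indicator {\<omega>. stake n \<omega> = x} \<omega> \<partial>count_space UNIV)
        = (\<integral>\<^sup>+x. f x * indicator {stake n \<omega>} x \<partial>count_space UNIV)"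
      by (rule nn_integral_cong) (auto simp: indicator_def)
    also have "\<dots> = f (stake n \<omega>)" by simp
    finally show "f (stake n \<omega>) = (\<integral>\<^sup>+x. f x * indicator {\<omega>. stake n \<omega> = x} \<omega> \<partial>count_space UNIV)" by simp
  qed
  also have "\<dots> = (\<integral>\<^sup>+x. \<integral>\<^sup>+\<omega>. f x * indicator {\<omega>. stake n \<omega> = x} \<omega> \<partial>\<nu> \<partial>count_space UNIV)"
  proof (rule nn_integral_count_space_nn_integral)
    fix x :: "'a list"
    have [measurable]: "{\<omega>. stake n \<omega> = x} \<in> sets \<nu>" by (rule stake_set[OF \<nu>])
    show "(\<lambda>\<omega>. f x * indicator {\<omega>. stake n \<omega> = x} \<omega>) \<in> borel_measurable \<nu>" by measurable
  qed simp
  also have "\<dots> = (\<integral>\<^sup>+x. f x * (indicator {x. length x = n} x * ennreal (mcyl \<nu> x)) \<partial>count_space UNIV)"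
  proof (rule nn_integral_cong)
    fix x :: "'a list"
    have "(\<integral>\<^sup>+\<omega>. f x * indicator {\<omega>. stake n \<omega> = x} \<omega> \<partial>\<nu>) = f x * emeasure \<nu> {\<omega>. stake n \<omega> = x}"
      by (rule nn_integral_cmult_indicator[OF stake_set[OF \<nu>]])
    also have "emeasure \<nu> {\<omega>. stake n \<omega> = x} = indicator {x. length x = n} x * ennreal (mcyl \<nu> x)"
      by (simp add: stake_set_eq emeasure_eq_measure mcyl_def)
    finally show "(\<integral>\<^sup>+\<omega>. f x * indicator {\<omega>. stake n \<omega> = x} \<omega> \<partial>\<nu>)
        = f x * (indicator {x. length x = n} x * ennreal (mcyl \<nu> x))" .
  qed
  finally show ?thesis .
qed

lemma ennreal_suminf_tendsto0:
  fixes f :: "nat \<Rightarrow> ennreal"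
  assumes "suminf f \<noteq> top" shows "f \<longlonglongrightarrow> 0"
proof -
  have fin: "f i \<noteq> top" for i
    using ennreal_suminf_lessD[of f top i] assms by (simp add: top.not_eq_extremum)
  define g where "g i = enn2real (f i)" for i
  have fg: "f = (\<lambda>i. ennreal (g i))" using fin by (auto simp: g_def fun_eq_iff ennreal_enn2real_if)
  have "summable g" using assms unfolding fg by (intro summable_suminf_not_top) (auto simp: g_def)
  hence "g \<longlonglongrightarrow> 0" by (rule summable_LIMSEQ_zero)
  hence "(\<lambda>i. ennreal (g i)) \<longlonglongrightarrow> ennreal 0" by (rule tendsto_ennrealI)
  thus ?thesis unfolding fg by simp
qed


lemma DD_step_nonneg: "\<nu> \<in> M \<Longrightarrow> 0 \<le> DD \<nu> (Suc t) - DD \<nu> t"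
  using has_sum_nonneg[OF GG_level] GG_nonneg by blast

lemma main_bound:
  assumes muM: "\<mu> \<in> M" and Entfin: "(\<lambda>\<nu>. - (w \<nu> * ln (w \<nu>))) summable_on M"
  shows "(\<integral>\<^sup>+\<omega>. Cinf M w \<omega> \<partial>\<mu>) \<le> ennreal (Ent M w / w \<mu>)"
proof -
  define cv where "cv x = (\<integral>\<^sup>+\<nu>. ennreal (post M w \<nu> x * dKL M w x \<nu>) \<partial>count_space M)" for x
  define L where "L t = {x::'a list. length x = t}" for t
  have ct_eq: "\<And>t \<omega>. ct M w (Suc t) \<omega> = cv (stake t \<omega>)" by (simp add: ct_def cv_def)
  have meas: "\<And>t. (\<lambda>\<omega>. cv (stake t \<omega>)) \<in> borel_measurable \<mu>"
    by (rule measurable_compose[OF stake_meas[OF muM]]) simp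
  have wmu: "0 < w \<mu>" using wpos[OF muM] by simp
  have pd: "\<And>\<nu> x. \<nu> \<in> M \<Longrightarrow> post M w \<nu> x * dKL M w x \<nu> = w \<nu> * GG \<nu> x / xi M w x"
    by (simp add: post_def flip: dKL_eq)
  have step2: "(\<integral>\<^sup>+\<omega>. cv (stake t \<omega>) \<partial>\<mu>)
      \<le> (\<integral>\<^sup>+\<nu>. ennreal (w \<nu> / w \<mu> * (DD \<nu> (Suc t) - DD \<nu> t)) \<partial>count_space M)" for t
  proof -
    have "(\<integral>\<^sup>+\<omega>. cv (stake t \<omega>) \<partial>\<mu>)
        = (\<integral>\<^sup>+x. cv x * (indicator (L t) x * ennreal (mcyl \<mu> x)) \<partial>count_space UNIV)"
      unfolding L_def by (rule stake_integral[OF muM])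
    also have "\<dots> \<le> (\<integral>\<^sup>+x. \<integral>\<^sup>+\<nu>. indicator (L t) x * ennreal (w \<nu> / w \<mu> * GG \<nu> x)
                        \<partial>count_space M \<partial>count_space UNIV)"
    proof (rule nn_integral_mono)
      fix x
      have "cv x * ennreal (mcyl \<mu> x)
          = (\<integral>\<^sup>+\<nu>. ennreal (post M w \<nu> x * dKL M w x \<nu>) * ennreal (mcyl \<mu> x) \<partial>count_space M)"
        by (simp add: cv_def nn_integral_multc)
      also have "\<dots> \<le> (\<integral>\<^sup>+\<nu>. ennreal (w \<nu> / w \<mu> * GG \<nu> x) \<partial>count_space M)"
      proof (rule nn_integral_mono)
        fix \<nu> assume "\<nu> \<in> space (count_space M)"
        hence \<nu>: "\<nu> \<in> M" by simp
        have c0: "0 \<le> w \<nu> * GG \<nu> x" using w_nonneg[OF \<nu>] GG_nonneg[OF \<nu>] by simp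
        have xg: "w \<mu> * mcyl \<mu> x \<le> xi M w x" by (rule xi_ge[OF muM])
        have ineq: "w \<nu> * GG \<nu> x / xi M w x * mcyl \<mu> x \<le> w \<nu> / w \<mu> * GG \<nu> x"
        proof (cases "xi M w x = 0")
          case True thus ?thesis using c0 wmu by simp
        next
          case False
          hence xp: "0 < xi M w x" using xi_nonneg[of x] by simp
          have "w \<nu> * GG \<nu> x * (w \<mu> * mcyl \<mu> x) \<le> w \<nu> * GG \<nu> x * xi M w x"
            by (rule mult_left_mono[OF xg c0])
          thus ?thesis using xp wmu by (simp add: field_simps)
        qed
        have "ennreal (post M w \<nu> x * dKL M w x \<nu>) * ennreal (mcyl \<mu> x)
            = ennreal (w \<nu> * GG \<nu> x / xi M w x * mcyl \<mu> x)"
        proof -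
          have d0: "0 \<le> w \<nu> * GG \<nu> x / xi M w x" using c0 xi_nonneg[of x] by simp
          show ?thesis unfolding pd[OF \<nu>] by (rule ennreal_mult[OF d0 m_nonneg, symmetric])
        qed
        also have "\<dots> \<le> ennreal (w \<nu> / w \<mu> * GG \<nu> x)" by (rule ennreal_leI[OF ineq])
        finally show "ennreal (post M w \<nu> x * dKL M w x \<nu>) * ennreal (mcyl \<mu> x)
            \<le> ennreal (w \<nu> / w \<mu> * GG \<nu> x)" .
      qed
      finally have *: "cv x * ennreal (mcyl \<mu> x) \<le> (\<integral>\<^sup>+\<nu>. ennreal (w \<nu> / w \<mu> * GG \<nu> x) \<partial>count_space M)" .
      show "cv x * (indicator (L t) x * ennreal (mcyl \<mu> x))
          \<le> (\<integral>\<^sup>+\<nu>. indicator (L t) x * ennreal (w \<nu> / w \<mu> * GG \<nu> x) \<partial>count_space M)"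
        using * by (cases "x \<in> L t") auto
    qed
    also have "\<dots> = (\<integral>\<^sup>+\<nu>. \<integral>\<^sup>+x. indicator (L t) x * ennreal (w \<nu> / w \<mu> * GG \<nu> x)
                        \<partial>count_space UNIV \<partial>count_space M)"
      by (rule nn_integral_count_space_nn_integral[OF countM]) simp
    also have "\<dots> = (\<integral>\<^sup>+\<nu>. ennreal (w \<nu> / w \<mu> * (DD \<nu> (Suc t) - DD \<nu> t)) \<partial>count_space M)"
    proof (rule nn_integral_cong)
      fix \<nu> assume "\<nu> \<in> space (count_space M)"
      hence \<nu>: "\<nu> \<in> M" by simp
      have c0: "0 \<le> w \<nu> / w \<mu>" using w_nonneg[OF \<nu>] wmu by simp
      have "(\<integral>\<^sup>+x. indicator (L t) x * ennreal (w \<nu> / w \<mu> * GG \<nu> x) \<partial>count_space UNIV)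
          = (\<integral>\<^sup>+x. ennreal (w \<nu> / w \<mu> * GG \<nu> x) \<partial>count_space (L t))"
        by (simp add: nn_integral_count_space_indicator mult.commute)
      also have "\<dots> = ennreal (w \<nu> / w \<mu> * (DD \<nu> (Suc t) - DD \<nu> t))"
        by (rule has_sum_to_nn[OF has_sum_cmult_right[OF GG_level[OF \<nu>]], folded L_def])
           (use mult_nonneg_nonneg[OF c0 GG_nonneg[OF \<nu>]] in auto)
      finally show "(\<integral>\<^sup>+x. indicator (L t) x * ennreal (w \<nu> / w \<mu> * GG \<nu> x) \<partial>count_space UNIV)
          = ennreal (w \<nu> / w \<mu> * (DD \<nu> (Suc t) - DD \<nu> t))" .
    qed
    finally show ?thesis .
  qed
  have "(\<integral>\<^sup>+\<omega>. Cinf M w \<omega> \<partial>\<mu>) = (\<Sum>t. \<integral>\<^sup>+\<omega>. cv (stake t \<omega>) \<partial>\<mu>)"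
    unfolding Cinf_def ct_eq by (rule nn_integral_suminf[OF meas])
  also have "\<dots> \<le> (\<Sum>t. \<integral>\<^sup>+\<nu>. ennreal (w \<nu> / w \<mu> * (DD \<nu> (Suc t) - DD \<nu> t)) \<partial>count_space M)"
    by (rule suminf_le[OF step2 summableI summableI])
  also have "\<dots> = (\<integral>\<^sup>+\<nu>. (\<Sum>t. ennreal (w \<nu> / w \<mu> * (DD \<nu> (Suc t) - DD \<nu> t))) \<partial>count_space M)"
    by (rule nn_integral_suminf[symmetric]) simp
  also have "\<dots> \<le> (\<integral>\<^sup>+\<nu>. ennreal (w \<nu> / w \<mu> * (- ln (w \<nu>))) \<partial>count_space M)"
  proof (rule nn_integral_mono)
    fix \<nu> assume "\<nu> \<in> space (count_space M)"
    hence \<nu>: "\<nu> \<in> M" by simp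
    have c0: "0 \<le> w \<nu> / w \<mu>" using w_nonneg[OF \<nu>] wmu by simp
    show "(\<Sum>t. ennreal (w \<nu> / w \<mu> * (DD \<nu> (Suc t) - DD \<nu> t))) \<le> ennreal (w \<nu> / w \<mu> * (- ln (w \<nu>)))"
    proof (rule suminf_le_const[OF summableI])
      fix n
      have E: "(\<Sum>t<n. ennreal (w \<nu> / w \<mu> * (DD \<nu> (Suc t) - DD \<nu> t)))
          = ennreal (\<Sum>t<n. w \<nu> / w \<mu> * (DD \<nu> (Suc t) - DD \<nu> t))"
        by (rule sum_ennreal) (use mult_nonneg_nonneg[OF c0 DD_step_nonneg[OF \<nu>]] in auto)
      have "(\<Sum>t<n. w \<nu> / w \<mu> * (DD \<nu> (Suc t) - DD \<nu> t)) = w \<nu> / w \<mu> * DD \<nu> n"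
      proof -
        have tel: "(\<Sum>t<n. DD \<nu> (Suc t) - DD \<nu> t) = DD \<nu> n"
          using sum_lessThan_telescope[of "DD \<nu>" n] DD_0[OF \<nu>] by simp
        show ?thesis unfolding sum_distrib_left[symmetric] tel by (rule refl)
      qed
      also have "w \<nu> / w \<mu> * DD \<nu> n \<le> w \<nu> / w \<mu> * (- ln (w \<nu>))"
        by (rule mult_left_mono[OF DD_le[OF \<nu>] c0])
      finally have R: "(\<Sum>t<n. w \<nu> / w \<mu> * (DD \<nu> (Suc t) - DD \<nu> t)) \<le> w \<nu> / w \<mu> * (- ln (w \<nu>))" .
      show "(\<Sum>t<n. ennreal (w \<nu> / w \<mu> * (DD \<nu> (Suc t) - DD \<nu> t)))
          \<le> ennreal (w \<nu> / w \<mu> * (- ln (w \<nu>)))" unfolding E by (rule ennreal_leI[OF R])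
    qed
  qed
  also have "\<dots> = ennreal (Ent M w / w \<mu>)"
  proof -
    have "((\<lambda>\<nu>. (1 / w \<mu>) * (- (w \<nu> * ln (w \<nu>)))) has_sum (1 / w \<mu>) * Ent M w) M"
      unfolding Ent_def by (rule has_sum_cmult_right[OF has_sum_infsum[OF Entfin]])
    hence "((\<lambda>\<nu>. w \<nu> / w \<mu> * (- ln (w \<nu>))) has_sum Ent M w / w \<mu>) M" by simp
    thus ?thesis
    proof (rule has_sum_to_nn)
      fix \<nu> assume \<nu>: "\<nu> \<in> M"
      have "0 \<le> - ln (w \<nu>)" using wpos[OF \<nu>] by simp
      moreover have "0 \<le> w \<nu> / w \<mu>" using wpos[OF \<nu>] wmu by simp
      ultimately show "0 \<le> w \<nu> / w \<mu> * (- ln (w \<nu>))" by (rule mult_nonneg_nonneg[rotated])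
    qed
  qed
  finally show ?thesis .
qed


lemma Cinf_meas: assumes muM: "\<mu> \<in> M" shows "Cinf M w \<in> borel_measurable \<mu>"
proof -
  have "\<And>t. (\<lambda>\<omega>. ct M w (Suc t) \<omega>) \<in> borel_measurable \<mu>"
  proof -
    fix t
    have "(\<lambda>\<omega>. ct M w (Suc t) \<omega>)
        = (\<lambda>\<omega>. (\<lambda>x. \<integral>\<^sup>+\<nu>. ennreal (post M w \<nu> x * dKL M w x \<nu>) \<partial>count_space M) (stake t \<omega>))"
      by (simp add: ct_def fun_eq_iff)
    also have "\<dots> \<in> borel_measurable \<mu>"
      by (rule measurable_compose[OF stake_meas[OF muM]]) simp
    finally show "(\<lambda>\<omega>. ct M w (Suc t) \<omega>) \<in> borel_measurable \<mu>" .
  qed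
  thus ?thesis unfolding Cinf_def[abs_def] by (rule borel_measurable_suminf_order)
qed

end

theorem theorem4:
  fixes M :: "('a::countable) stream measure set"
    and w :: "'a stream measure \<Rightarrow> real"
    and \<mu> :: "'a stream measure"
  assumes countM: "countable M"
    and probM: "\<And>\<nu>. \<nu> \<in> M \<Longrightarrow> prob_space \<nu>"
    and setsM: "\<And>\<nu>. \<nu> \<in> M \<Longrightarrow> sets \<nu> = sets (stream_space (count_space UNIV))"
    and wpos: "\<And>\<nu>. \<nu> \<in> M \<Longrightarrow> 0 < w \<nu> \<and> w \<nu> \<le> 1"
    and wsum: "(w has_sum 1) M"
    and muM: "\<mu> \<in> M"
    and Entfin: "(\<lambda>\<nu>. - (w \<nu> * ln (w \<nu>))) summable_on M"
  shows "(\<integral>\<^sup>+ \<omega>. Cinf M w \<omega> \<partial>\<mu>) \<le> ennreal (Ent M w / w \<mu>) \<and>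
         (AE \<omega> in \<mu>. (\<lambda>t. ct M w t \<omega>) \<longlonglongrightarrow> 0)"
proof -
  interpret pv M w by (rule pv.intro[OF countM probM setsM wpos wsum])
  have B: "(\<integral>\<^sup>+\<omega>. Cinf M w \<omega> \<partial>\<mu>) \<le> ennreal (Ent M w / w \<mu>)"
    by (rule main_bound[OF muM Entfin])
  have "(\<integral>\<^sup>+\<omega>. Cinf M w \<omega> \<partial>\<mu>) \<noteq> \<infinity>"
    using B ennreal_less_top[of "Ent M w / w \<mu>"] by (metis infinity_ennreal_def le_less_trans less_irrefl)
  hence "AE \<omega> in \<mu>. Cinf M w \<omega> \<noteq> \<infinity>"
    by (rule nn_integral_noteq_infinite[OF Cinf_meas[OF muM]])
  hence "AE \<omega> in \<mu>. (\<lambda>t. ct M w t \<omega>) \<longlonglongrightarrow> 0"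
  proof (rule eventually_mono)
    fix \<omega> assume "Cinf M w \<omega> \<noteq> \<infinity>"
    hence "(\<lambda>t. ct M w (Suc t) \<omega>) \<longlonglongrightarrow> 0"
      unfolding Cinf_def by (intro ennreal_suminf_tendsto0) simp
    thus "(\<lambda>t. ct M w t \<omega>) \<longlonglongrightarrow> 0" by (rule LIMSEQ_imp_Suc)
  qed
  with B show ?thesis by blast
qed

end
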